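(* For every integer $r\ge 1$ and every $\xi\in\mathbb{R}$, \[ \lim_{n\to\infty}\frac{1}{n}\log \mathbb{E}\left[\exp(\xi S_{r+1,n})\right]=\varphi^{r}(\xi), \] where $\varphi^r=\varphi\circ\cdots\circ\varphi$ denotes the $r$-fold composition of $\varphi(\xi)=\frac{\xi}{4}+\log\cosh\frac{\xi}{4}$, and $\mathbb{E}$ is expectation under the uniform probability measure on $\Omega_n$.
   Context: Let $\Omega_n$ be the set of rooted, planar, full binary trees with $n$ leaves (every node has $0$ or $2$ children, and the two children of each node are distinguished as left and right); $|\Omega_n|=\frac{(2n-2)!}{n!(n-1)!}$. The random binary tree model is $\Omega_n$ with the uniform probability measure. Strahler ordering: leaves have order 1; an internal node whose two children have different orders $r_1\neq r_2$ has order $\max\{r_1,r_2\}$; an internal node whose two children both have order $r$ has order $r+1$. A branch of order $r$ is a maximal connected path all of whose nodes have order $r$. For $\tau\in\Omega_n$, $S_{r,n}(\tau)$ is the number of branches of order $r$ in $\tau$; it is a random variable on the random model. *)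

theory Defs
  imports "HOL-Probability.Probability"
begin

datatype btree = Leaf | Node btree btree

fun leaves :: "btree \<Rightarrow> nat" where
  "leaves Leaf = 1"
| "leaves (Node l r) = leaves l + leaves r"

definition Omega :: "nat \<Rightarrow> btree set" where
  "Omega n = {t. leaves t = n}"

fun strahler :: "btree \<Rightarrow> nat" where
  "strahler Leaf = 1"
| "strahler (Node l r) =
     (if strahler l = strahler r then strahler l + 1 else max (strahler l) (strahler r))"

text \<open>A branch of order k is a maximal path of nodes of order k; each branch is
  determined by its topmost node, i.e. a node of order k that is either the root
  or whose parent has order different from k.  sub_branches counts such topmost
  nodes among the non-root nodes.\<close>
fun sub_branches :: "nat \<Rightarrow> btree \<Rightarrow> nat" where
  "sub_branches k Leaf = 0"
| "sub_branches k (Node l r) =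
     (if strahler l = k \<and> strahler (Node l r) \<noteq> k then 1 else 0)
   + (if strahler r = k \<and> strahler (Node l r) \<noteq> k then 1 else 0)
   + sub_branches k l + sub_branches k r"

definition S :: "nat \<Rightarrow> btree \<Rightarrow> nat" where
  "S k t = (if strahler t = k then 1 else 0) + sub_branches k t"

definition phi :: "real \<Rightarrow> real" where
  "phi \<xi> = \<xi> / 4 + ln (cosh (\<xi> / 4))"

end

theory Submission
  imports Defs "HOL-Real_Asymp.Real_Asymp"
begin

lemma leaves_pos: "leaves t \<ge> 1" by (induct t) auto
lemma strahler_pos: "strahler t \<ge> 1" by (induct t) auto
lemma strahler_Node: "strahler (Node l r) \<ge> 2"
  using strahler_pos[of l] strahler_pos[of r] by auto
lemma strahler_one_iff: "strahler t = 1 \<longleftrightarrow> t = Leaf"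
proof (cases t)
  case (Node l r) then show ?thesis using strahler_Node[of l r] by auto
qed simp

fun prune :: "btree \<Rightarrow> btree" where
  "prune Leaf = Leaf"
| "prune (Node Leaf Leaf) = Leaf"
| "prune (Node Leaf (Node a b)) = prune (Node a b)"
| "prune (Node (Node a b) Leaf) = prune (Node a b)"
| "prune (Node (Node a b) (Node c d)) = Node (prune (Node a b)) (prune (Node c d))"

lemma prune_L: "r \<noteq> Leaf \<Longrightarrow> prune (Node Leaf r) = prune r" by (cases r) auto
lemma prune_R: "l \<noteq> Leaf \<Longrightarrow> prune (Node l Leaf) = prune l" by (cases l) auto
lemma prune_LR: "l \<noteq> Leaf \<Longrightarrow> r \<noteq> Leaf \<Longrightarrow> prune (Node l r) = Node (prune l) (prune r)"
  by (cases l; cases r) auto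

lemma prune_strahler: "t \<noteq> Leaf \<Longrightarrow> strahler (prune t) = strahler t - 1"
proof (induct t)
  case (Node l r)
  show ?case
  proof (cases "l = Leaf")
    case True
    then show ?thesis using Node strahler_one_iff[of r]
      by (cases "r = Leaf") (auto simp: prune_L strahler_one_iff)
  next
    case False
    note lL = False
    show ?thesis
    proof (cases "r = Leaf")
      case True
      then show ?thesis using Node lL strahler_one_iff[of l] by (auto simp: prune_R)
    next
      case False
      then show ?thesis using Node lL strahler_one_iff[of l] strahler_one_iff[of r]
        strahler_pos[of l] strahler_pos[of r]
        by (auto simp: prune_LR)
    qed
  qed
qed simp

lemma sub_prune: "t \<noteq> Leaf \<Longrightarrow> k \<ge> 1 \<Longrightarrow> sub_branches (Suc k) t = sub_branches k (prune t)"
proof (induct t)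
  case (Node l r)
  show ?case
  proof (cases "l = Leaf")
    case True
    then show ?thesis using Node strahler_one_iff[of r]
      by (cases "r = Leaf") (auto simp: prune_L strahler_one_iff)
  next
    case False
    note lL = False
    show ?thesis
    proof (cases "r = Leaf")
      case True
      then show ?thesis using Node lL strahler_one_iff[of l] by (auto simp: prune_R)
    next
      case False
      have e: "strahler (prune (Node l r)) = strahler (Node l r) - 1"
        by (rule prune_strahler) simp
      have e1: "strahler (prune l) = strahler l - 1" using lL by (rule prune_strahler)
      have e2: "strahler (prune r) = strahler r - 1" using False by (rule prune_strahler)
      have s: "strahler (Node l r) \<ge> 2" by (rule strahler_Node)
      have sl: "strahler l \<ge> 2" using lL strahler_one_iff[of l] strahler_pos[of l] by auto
      have sr: "strahler r \<ge> 2" using False strahler_one_iff[of r] strahler_pos[of r] by auto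
      have pe: "prune (Node l r) = Node (prune l) (prune r)" using lL False by (rule prune_LR)
      have "sub_branches (Suc k) (Node l r) =
        (if strahler l = Suc k \<and> strahler (Node l r) \<noteq> Suc k then 1 else 0)
   + (if strahler r = Suc k \<and> strahler (Node l r) \<noteq> Suc k then 1 else 0)
   + sub_branches (Suc k) l + sub_branches (Suc k) r" by (simp only: sub_branches.simps)
      also have "\<dots> = (if strahler (prune l) = k \<and> strahler (prune (Node l r)) \<noteq> k then 1 else 0)
   + (if strahler (prune r) = k \<and> strahler (prune (Node l r)) \<noteq> k then 1 else 0)
   + sub_branches k (prune l) + sub_branches k (prune r)"
        using Node lL False e e1 e2 s sl sr by auto
      also have "\<dots> = sub_branches k (prune (Node l r))"
        by (simp only: pe sub_branches.simps)
      finally show ?thesis .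
    qed
  qed
qed simp

lemma S_prune: "t \<noteq> Leaf \<Longrightarrow> k \<ge> 1 \<Longrightarrow> S (Suc k) t = S k (prune t)"
  unfolding S_def using sub_prune[of t k] prune_strahler[of t] strahler_pos[of t]
  by auto

lemma S1: "S 1 t = leaves t"
proof (induct t)
  case Leaf then show ?case by (simp add: S_def)
next
  case (Node l r)
  have "strahler (Node l r) \<noteq> 1" using strahler_Node[of l r] by simp
  then show ?case using Node strahler_one_iff[of l] strahler_one_iff[of r]
    by (simp add: S_def del: strahler.simps)
qed

lemma leaves_prune: "leaves (prune t) \<le> leaves t"
  by (induct t rule: prune.induct) auto

fun enc :: "btree \<Rightarrow> bool list" where
  "enc Leaf = [False]"
| "enc (Node l r) = True # enc l @ enc r"

lemma enc_prefix: "enc s @ xs = enc t @ ys \<Longrightarrow> s = t \<and> xs = ys"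
proof (induct s arbitrary: t xs ys)
  case Leaf then show ?case by (cases t) simp_all
next
  case (Node l r)
  show ?case
  proof (cases t)
    case Leaf
    then show ?thesis using Node.prems by simp
  next
    case (Node l' r')
    with Node.prems have "enc l @ (enc r @ xs) = enc l' @ (enc r' @ ys)" by simp
    from Node.hyps(1)[OF this] have h: "l = l'" "enc r @ xs = enc r' @ ys" by simp_all
    from Node.hyps(2)[OF h(2)] h(1) Node show ?thesis by simp
  qed
qed

lemma inj_enc: "inj enc"
  by (rule injI) (metis append_Nil2 enc_prefix)

lemma length_enc0: "length (enc t) + 1 = 2 * leaves t"
  by (induct t) auto

lemma length_enc: "length (enc t) = 2 * leaves t - 1"
  using length_enc0[of t] by simp

lemma fin_bl: "finite {xs::bool list. length xs = L}"
  using finite_lists_length_eq[of "UNIV::bool set" L] by simp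

lemma enc_Omega: "enc ` Omega n \<subseteq> {xs. set xs \<subseteq> UNIV \<and> length xs = 2*n - 1}"
  by (auto simp: Omega_def length_enc)

lemma finite_Omega: "finite (Omega n)"
proof -
  have "finite (enc ` Omega n)"
    by (rule finite_subset[OF enc_Omega]) (simp add: fin_bl)
  then show ?thesis using inj_enc finite_imageD inj_on_subset by blast
qed

lemma card_Omega_le: "card (Omega n) \<le> 4 ^ n"
proof -
  have "card (Omega n) = card (enc ` Omega n)"
    using inj_enc by (simp add: card_image inj_on_subset)
  also have "\<dots> \<le> card {xs. set xs \<subseteq> (UNIV::bool set) \<and> length xs = 2*n - 1}"
    by (rule card_mono[OF _ enc_Omega]) (simp add: fin_bl)
  also have "\<dots> = 2 ^ (2*n - 1)" using card_lists_length_eq[of "UNIV::bool set" "2*n-1"] by simp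
  also have "\<dots> \<le> 2 ^ (2*n)" by (rule power_increasing) auto
  also have "\<dots> = 4 ^ n" by (simp add: power_mult)
  finally show ?thesis .
qed

lemma Omega_1: "Omega 1 = {Leaf}"
proof -
  have "leaves t = 1 \<longleftrightarrow> t = Leaf" for t
  proof (cases t)
    case (Node l r)
    then show ?thesis using leaves_pos[of l] leaves_pos[of r] by auto
  qed simp
  then show ?thesis by (auto simp: Omega_def)
qed

fun cat :: "nat \<Rightarrow> btree" where
  "cat 0 = Leaf" | "cat (Suc n) = Node Leaf (cat n)"

lemma leaves_cat: "leaves (cat n) = Suc n" by (induct n) auto

lemma Omega_ne: "n \<ge> 1 \<Longrightarrow> Omega n \<noteq> {}"
  using leaves_cat[of "n - 1"] by (auto simp: Omega_def)

lemma Omega_decomp: "n \<ge> 2 \<Longrightarrow>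
  Omega n = (\<Union>j<n-1. (\<lambda>(l,r). Node l r) ` (Omega (j+1) \<times> Omega (n-1-j)))"
proof (intro equalityI subsetI)
  fix t assume n: "n \<ge> 2" and t: "t \<in> Omega n"
  show "t \<in> (\<Union>j<n-1. (\<lambda>(l,r). Node l r) ` (Omega (j+1) \<times> Omega (n-1-j)))"
  proof (cases t)
    case Leaf then show ?thesis using n t by (simp add: Omega_def)
  next
    case (Node l r)
    have "leaves l \<ge> 1" "leaves r \<ge> 1" by (rule leaves_pos)+
    note lr = this
    have tl: "leaves l + leaves r = n" using t Node by (simp add: Omega_def)
    have j: "leaves l - 1 < n - 1" using lr tl by linarith
    have "(l, r) \<in> Omega (leaves l - 1 + 1) \<times> Omega (n - 1 - (leaves l - 1))"
      using lr tl by (simp add: Omega_def)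
    then have "t \<in> (\<lambda>(l,r). Node l r) ` (Omega (leaves l - 1 + 1) \<times> Omega (n - 1 - (leaves l - 1)))"
      using Node by force
    then show ?thesis using j by blast
  qed
next
  fix t assume n: "n \<ge> 2" and t: "t \<in> (\<Union>j<n-1. (\<lambda>(l,r). Node l r) ` (Omega (j+1) \<times> Omega (n-1-j)))"
  then show "t \<in> Omega n" by (auto simp: Omega_def)
qed

lemma sum_Omega_decomp:
  fixes h :: "btree \<Rightarrow> 'a::comm_monoid_add"
  assumes "n \<ge> 2"
  shows "sum h (Omega n) = (\<Sum>j<n-1. \<Sum>l\<in>Omega (j+1). \<Sum>r\<in>Omega (n-1-j). h (Node l r))"
proof -
  have "sum h (Omega n) = (\<Sum>j<n-1. sum h ((\<lambda>(l,r). Node l r) ` (Omega (j+1) \<times> Omega (n-1-j))))"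
    unfolding Omega_decomp[OF assms]
    apply (rule sum.UNION_disjoint)
      apply simp
     apply (simp add: finite_Omega)
    apply (auto simp: Omega_def)
    done
  also have "\<dots> = (\<Sum>j<n-1. \<Sum>l\<in>Omega (j+1). \<Sum>r\<in>Omega (n-1-j). h (Node l r))"
  proof (rule sum.cong[OF refl])
    fix j
    have "sum h ((\<lambda>(l,r). Node l r) ` (Omega (j+1) \<times> Omega (n-1-j))) =
          sum (h \<circ> (\<lambda>(l,r). Node l r)) (Omega (j+1) \<times> Omega (n-1-j))"
      by (rule sum.reindex) (auto simp: inj_on_def)
    also have "\<dots> = (\<Sum>l\<in>Omega (j+1). \<Sum>r\<in>Omega (n-1-j). h (Node l r))"
      by (simp add: sum.cartesian_product case_prod_beta' comp_def)
    finally show "sum h ((\<lambda>(l,r). Node l r) ` (Omega (j+1) \<times> Omega (n-1-j))) =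
      (\<Sum>l\<in>Omega (j+1). \<Sum>r\<in>Omega (n-1-j). h (Node l r))" .
  qed
  finally show ?thesis .
qed

lemma conv_le: "(\<Sum>i\<le>n. (i choose p) * ((n - i) choose q)) = Suc n choose (p + q + 1)"
proof (induct n arbitrary: q)
  case 0 then show ?case by (cases p; cases q) auto
next
  case (Suc n)
  show ?case
  proof (cases q)
    case 0
    have "(\<Sum>i\<le>Suc n. (i choose p) * ((Suc n - i) choose q)) = (\<Sum>i\<le>Suc n. (i choose p))"
      using 0 by simp
    also have "\<dots> = Suc (Suc n) choose Suc p" by (rule sum_choose_upper)
    finally show ?thesis using 0 by simp
  next
    case (Suc q')
    have "(\<Sum>i\<le>Suc n. (i choose p) * ((Suc n - i) choose q)) =
          (\<Sum>i\<le>n. (i choose p) * ((Suc n - i) choose q))"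
      using Suc by simp
    also have "\<dots> = (\<Sum>i\<le>n. (i choose p) * ((n - i) choose q) + (i choose p) * ((n - i) choose q'))"
      by (rule sum.cong[OF refl]) (simp add: Suc Suc_diff_le algebra_simps)
    also have "\<dots> = (Suc n choose (p + q + 1)) + (Suc n choose (p + q' + 1))"
      by (simp add: sum.distrib Suc.hyps)
    also have "\<dots> = Suc (Suc n) choose (p + q + 1)"
      using Suc by simp
    finally show ?thesis .
  qed
qed

lemma conv_less: "(\<Sum>i<N. (i choose p) * ((N - 1 - i) choose q)) = N choose (p + q + 1)"
proof (cases N)
  case (Suc n)
  have "(\<Sum>i<N. (i choose p) * ((N - 1 - i) choose q)) = (\<Sum>i\<le>n. (i choose p) * ((n - i) choose q))"
    using Suc lessThan_Suc_atMost by simp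
  then show ?thesis using conv_le Suc by simp
qed simp

definition cnt :: "btree \<Rightarrow> nat \<Rightarrow> real" where
  "cnt s n = (\<Sum>t\<in>Omega n. if prune t = s then 1 else 0)"

definition cc :: "nat \<Rightarrow> nat \<Rightarrow> real" where
  "cc N M = real (N choose (2*M)) * 2 ^ N / 4 ^ M"

lemma Omega_ge2_notLeaf: "t \<in> Omega n \<Longrightarrow> n \<ge> 2 \<Longrightarrow> t \<noteq> Leaf"
  by (auto simp: Omega_def)

lemma split3: "(\<Sum>j<Suc (Suc N). g j) = g 0 + (\<Sum>i<N. g (Suc i)) + (g (Suc N) :: real)"
  by (subst sum.lessThan_Suc_shift) (simp add: add.assoc)

lemma Omega_Suc0: "Omega (Suc 0) = {Leaf}" using Omega_1 by simp

lemma cnt_2: "cnt s 2 = (if s = Leaf then 1 else 0)"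
  unfolding cnt_def by (subst sum_Omega_decomp) (auto simp: Omega_Suc0)

lemma cnt_rec:
  "cnt s (N+3) = 2 * cnt s (N+2) +
     (case s of Leaf \<Rightarrow> 0 | Node s1 s2 \<Rightarrow> (\<Sum>i<N. cnt s1 (i+2) * cnt s2 (N+1-i)))"
proof -
  define h where "h t = (if prune t = s then 1 else (0::real))" for t
  define G where "G j = (\<Sum>l\<in>Omega (j+1). \<Sum>r\<in>Omega (N+2-j). h (Node l r))" for j
  have "cnt s (N+3) = (\<Sum>j<Suc (Suc N). G j)"
    unfolding cnt_def h_def[symmetric] G_def by (subst sum_Omega_decomp) (auto simp: numeral_3_eq_3)
  also have "\<dots> = G 0 + (\<Sum>i<N. G (Suc i)) + G (Suc N)" by (rule split3)
  also have "\<dots> = (\<Sum>l\<in>Omega 1. \<Sum>r\<in>Omega (N+2). h (Node l r))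
     + (\<Sum>j<N. \<Sum>l\<in>Omega (j+2). \<Sum>r\<in>Omega (N+1-j). h (Node l r))
     + (\<Sum>l\<in>Omega (N+2). \<Sum>r\<in>Omega 1. h (Node l r))"
    unfolding G_def by (simp add: Suc_diff_le)
  also have "(\<Sum>l\<in>Omega 1. \<Sum>r\<in>Omega (N+2). h (Node l r)) = cnt s (N+2)"
    unfolding Omega_1 cnt_def h_def
    by (auto intro!: sum.cong simp: prune_L Omega_ge2_notLeaf)
  also have "(\<Sum>l\<in>Omega (N+2). \<Sum>r\<in>Omega 1. h (Node l r)) = cnt s (N+2)"
    unfolding Omega_1 cnt_def h_def
    by (auto intro!: sum.cong simp: prune_R Omega_ge2_notLeaf)
  also have "(\<Sum>j<N. \<Sum>l\<in>Omega (j+2). \<Sum>r\<in>Omega (N+1-j). h (Node l r)) =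
      (case s of Leaf \<Rightarrow> 0 | Node s1 s2 \<Rightarrow> (\<Sum>i<N. cnt s1 (i+2) * cnt s2 (N+1-i)))"
  proof (cases s)
    case Leaf
    then show ?thesis unfolding h_def
      by (auto intro!: sum.neutral simp: prune_LR Omega_ge2_notLeaf)
  next
    case (Node s1 s2)
    have "(\<Sum>l\<in>Omega (j+2). \<Sum>r\<in>Omega (N+1-j). h (Node l r)) = cnt s1 (j+2) * cnt s2 (N+1-j)"
      if "j < N" for j
    proof -
      have "(\<Sum>l\<in>Omega (j+2). \<Sum>r\<in>Omega (N+1-j). h (Node l r)) =
            (\<Sum>l\<in>Omega (j+2). \<Sum>r\<in>Omega (N+1-j). (if prune l = s1 then 1 else 0) * (if prune r = s2 then 1 else (0::real)))"
        unfolding h_def Node using that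
        by (intro sum.cong refl) (auto simp: prune_LR Omega_ge2_notLeaf)
      also have "\<dots> = cnt s1 (j+2) * cnt s2 (N+1-j)"
        unfolding cnt_def by (simp add: sum_product)
      finally show ?thesis .
    qed
    then show ?thesis using Node by simp
  qed
  finally show ?thesis by simp
qed

lemma cc_0: "cc N 0 = 2 ^ N" by (simp add: cc_def)

lemma cc_rec:
  assumes "M = M1 + M2 + 1"
  shows "cc (Suc N) M = 2 * cc N M + (\<Sum>i<N. cc i M1 * cc (N - 1 - i) M2)"
proof -
  have t: "cc i M1 * cc (N - 1 - i) M2 =
      real ((i choose (2*M1)) * ((N - 1 - i) choose (2*M2))) * (2 ^ Suc N / 4 ^ M)" if "i < N" for i
  proof -
    have p2: "(2::real) ^ i * 2 ^ (N - 1 - i) * 4 = 2 ^ Suc N"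
      using that by (cases N) (simp_all add: power_add[symmetric])
    have p4: "(4::real) ^ M1 * 4 ^ M2 * 4 = 4 ^ M"
      using assms by (simp add: power_add[symmetric])
    have "cc i M1 * cc (N - 1 - i) M2 =
      real ((i choose (2*M1)) * ((N - 1 - i) choose (2*M2))) * ((2 ^ i * 2 ^ (N - 1 - i) * 4) / (4 ^ M1 * 4 ^ M2 * 4))"
      unfolding cc_def by (simp add: field_simps)
    then show ?thesis by (simp only: p2 p4)
  qed
  have "(\<Sum>i<N. cc i M1 * cc (N - 1 - i) M2) =
        (\<Sum>i<N. real ((i choose (2*M1)) * ((N - 1 - i) choose (2*M2))) * (2 ^ Suc N / 4 ^ M))"
    by (rule sum.cong[OF refl], rule t) simp
  also have "\<dots> = real (\<Sum>i<N. (i choose (2*M1)) * ((N - 1 - i) choose (2*M2))) * (2 ^ Suc N / 4 ^ M)"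
    by (simp only: of_nat_sum sum_distrib_right)
  also have "\<dots> = real (N choose (2*M1 + 2*M2 + 1)) * (2 ^ Suc N / 4 ^ M)"
    using conv_less[where N=N and p="2*M1" and q="2*M2"] by (simp only:)
  finally have s: "(\<Sum>i<N. cc i M1 * cc (N - 1 - i) M2) = real (N choose (2*M1 + 2*M2 + 1)) * (2 ^ Suc N / 4 ^ M)" .
  have b: "Suc N choose (2*M) = (N choose (2*M1 + 2*M2 + 1)) + (N choose (2*M))"
    using assms binomial_Suc_Suc[of N "2*M1 + 2*M2 + 1"] by simp
  show ?thesis unfolding s unfolding cc_def b by (simp add: field_simps)
qed

lemma cnt_2': "cnt s (Suc (Suc 0)) = (if s = Leaf then 1 else 0)"
  using cnt_2[of s] by (simp add: numeral_2_eq_2)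

lemma cnt_closed: "cnt s (N+2) = cc N (leaves s - 1)"
proof (induct s arbitrary: N)
  case Leaf
  show ?case
  proof (induct N)
    case 0 then show ?case by (simp add: cnt_2' cc_0)
  next
    case (Suc N)
    then show ?case using cnt_rec[of Leaf N] by (simp add: cc_0 numeral_3_eq_3)
  qed
next
  case (Node s1 s2)
  define M1 where "M1 = leaves s1 - 1"
  define M2 where "M2 = leaves s2 - 1"
  have M: "leaves (Node s1 s2) - 1 = M1 + M2 + 1"
    using leaves_pos[of s1] leaves_pos[of s2] by (simp add: M1_def M2_def)
  show ?case
  proof (induct N)
    case 0
    then show ?case using M by (simp add: cnt_2' cc_def)
  next
    case (Suc N')
    have "cnt (Node s1 s2) (N' + 3) = 2 * cnt (Node s1 s2) (N' + 2)
       + (\<Sum>i<N'. cnt s1 (i+2) * cnt s2 (N'+1-i))"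
      using cnt_rec[of "Node s1 s2" N'] by simp
    also have "(\<Sum>i<N'. cnt s1 (i+2) * cnt s2 (N'+1-i)) = (\<Sum>i<N'. cc i M1 * cc (N' - 1 - i) M2)"
    proof (rule sum.cong[OF refl])
      fix i assume "i \<in> {..<N'}"
      then have "N' + 1 - i = (N' - 1 - i) + 2" by auto
      then show "cnt s1 (i+2) * cnt s2 (N'+1-i) = cc i M1 * cc (N' - 1 - i) M2"
        using Node.hyps(1)[of i] Node.hyps(2)[of "N' - 1 - i"] by (simp add: M1_def M2_def)
    qed
    also have "cnt (Node s1 s2) (N' + 2) = cc N' (M1 + M2 + 1)"
      using Suc.hyps M by simp
    finally show ?case using M cc_rec[of "M1+M2+1" M1 M2 N'] by (simp add: numeral_3_eq_3)
  qed
qed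

lemma cnt_closed': "cnt s (Suc (Suc N)) = cc N (leaves s - 1)"
  using cnt_closed[of s N] by simp

lemma sum_S_rec:
  fixes f :: "nat \<Rightarrow> real"
  assumes k: "k \<ge> 1"
  shows "(\<Sum>t\<in>Omega (N+2). f (S (Suc k) t)) = (\<Sum>M\<le>N+1. cc N M * (\<Sum>s\<in>Omega (M+1). f (S k s)))"
proof -
  define B where "B = (\<Union>M\<in>{..N+1}. Omega (M+1))"
  have fB: "finite B" unfolding B_def by (simp add: finite_Omega)
  have sub: "prune ` Omega (N+2) \<subseteq> B"
  proof
    fix s assume "s \<in> prune ` Omega (N+2)"
    then obtain t where t: "t \<in> Omega (N+2)" "s = prune t" by auto
    have "leaves s \<le> N + 2" using leaves_prune[of t] t by (simp add: Omega_def)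
    moreover have "leaves s \<ge> 1" by (rule leaves_pos)
    ultimately have "leaves s - 1 \<in> {..N+1}" "s \<in> Omega (leaves s - 1 + 1)" by (auto simp: Omega_def)
    then show "s \<in> B" unfolding B_def by blast
  qed
  have "(\<Sum>t\<in>Omega (N+2). f (S (Suc k) t)) = (\<Sum>t\<in>Omega (N+2). f (S k (prune t)))"
    by (rule sum.cong[OF refl]) (use k Omega_ge2_notLeaf S_prune in auto)
  also have "\<dots> = (\<Sum>s\<in>B. \<Sum>t\<in>{t. t \<in> Omega (N+2) \<and> prune t = s}. f (S k (prune t)))"
    by (rule sum.group[symmetric, OF finite_Omega fB sub])
  also have "\<dots> = (\<Sum>s\<in>B. cnt s (N+2) * f (S k s))"
  proof (rule sum.cong[OF refl])
    fix s
    have "(\<Sum>t\<in>{t. t \<in> Omega (N+2) \<and> prune t = s}. f (S k (prune t))) =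
          (\<Sum>t\<in>{t \<in> Omega (N+2). prune t = s}. f (S k s))"
      by (rule sum.cong) auto
    also have "\<dots> = (\<Sum>t\<in>Omega (N+2). if prune t = s then f (S k s) else 0)"
      by (rule sum.inter_filter[OF finite_Omega])
    also have "\<dots> = cnt s (N+2) * f (S k s)"
      unfolding cnt_def sum_distrib_right by (rule sum.cong) auto
    finally show "(\<Sum>t\<in>{t. t \<in> Omega (N+2) \<and> prune t = s}. f (S k (prune t))) = cnt s (N+2) * f (S k s)" .
  qed
  also have "\<dots> = (\<Sum>M\<le>N+1. \<Sum>s\<in>Omega (M+1). cnt s (N+2) * f (S k s))"
    unfolding B_def
    apply (rule sum.UNION_disjoint)
      apply simp
     apply (simp add: finite_Omega)
    apply (auto simp: Omega_def)
    done
  also have "\<dots> = (\<Sum>M\<le>N+1. cc N M * (\<Sum>s\<in>Omega (M+1). f (S k s)))"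
    unfolding sum_distrib_left
    by (intro sum.cong refl) (simp add: cnt_closed' Omega_def)
  finally show ?thesis .
qed

lemma even_sum: "(\<Sum>M\<le>N+1. real (N choose (2*M)) * y^(2*M)) * 2 = (1+y)^N + (1-y)^N"
proof -
  define g where "g k = real (N choose k) * (y^k + (-y)^k)" for k
  have "(1+y)^N + (1-y)^N = (\<Sum>k\<le>N. g k)"
    using binomial_ring[of y 1 N] binomial_ring[of "-y" 1 N]
    by (simp add: g_def sum.distrib algebra_simps)
  also have "\<dots> = (\<Sum>k\<le>Suc (2*(N+1)). g k)"
    by (rule sum.mono_neutral_left) (auto simp: g_def)
  also have "\<dots> = (\<Sum>i\<le>N+1. g (2*i) + g (Suc (2*i)))"
    by (rule sum.in_pairs_0)
  also have "\<dots> = (\<Sum>i\<le>N+1. 2 * (real (N choose (2*i)) * y^(2*i)))"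
    by (rule sum.cong[OF refl]) (simp add: g_def)
  finally show ?thesis by (simp add: sum_distrib_left mult.commute)
qed

definition Q :: "nat \<Rightarrow> real \<Rightarrow> real" where
  "Q N x = (\<Sum>M\<le>N+1. cc N M * x^(M+1))"

lemma cc_nonneg: "cc N M \<ge> 0" by (simp add: cc_def)

lemma Q_closed:
  assumes "x \<ge> 0"
  shows "Q N x = x / 2 * ((2 + sqrt x)^N + (2 - sqrt x)^N)"
proof -
  define y where "y = sqrt x / 2"
  have xy: "x / 4 = y^2" using assms by (simp add: y_def power_divide)
  have t: "cc N M * x^(M+1) = x * 2^N * (real (N choose (2*M)) * y^(2*M))" for M
  proof -
    have "y^(2*M) = x^M / 4^M" by (simp add: power_mult xy[symmetric] power_divide)
    then show ?thesis by (simp add: cc_def)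
  qed
  define Sm where "Sm = (\<Sum>M\<le>N+1. real (N choose (2*M)) * y^(2*M))"
  have Sm: "Sm = ((1+y)^N + (1-y)^N) / 2"
    using even_sum[of N y] unfolding Sm_def[symmetric] by (simp add: field_simps)
  have "Q N x = x * 2^N * Sm"
    unfolding Q_def t Sm_def by (simp only: sum_distrib_left)
  also have "\<dots> = x / 2 * (2^N * ((1+y)^N + (1-y)^N))"
    unfolding Sm by simp
  also have "2^N * ((1+y)^N + (1-y)^N) = (2 + sqrt x)^N + (2 - sqrt x)^N"
    by (simp add: y_def power_mult_distrib[symmetric] algebra_simps)
  finally show ?thesis .
qed

lemma Q_pos: "x > 0 \<Longrightarrow> Q N x > 0"
proof -
  assume x: "x > 0"
  have s: "sqrt x > 0" using x by simp
  have lt: "\<bar>2 - sqrt x\<bar> < 2 + sqrt x" using s unfolding abs_less_iff by linarith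
  have p: "(2 + sqrt x)^N > 0" using s by (intro zero_less_power) linarith
  have "(2 + sqrt x)^N + (2 - sqrt x)^N > 0"
  proof (cases N)
    case 0 then show ?thesis by simp
  next
    case (Suc n)
    have "\<bar>2 - sqrt x\<bar>^N < (2 + sqrt x)^N"
      using lt Suc by (intro power_strict_mono) auto
    then have "\<bar>(2 - sqrt x)^N\<bar> < (2 + sqrt x)^N" by (simp add: power_abs)
    then show ?thesis unfolding abs_less_iff by linarith
  qed
  then show ?thesis using x by (simp add: Q_closed)
qed

lemma l1: "(\<lambda>N. 1 / real (N+2)) \<longlonglongrightarrow> 0" by real_asymp
lemma l2: "(\<lambda>N. real N / real (N+2)) \<longlonglongrightarrow> 1" by real_asymp

lemma Q_lim:
  assumes x: "x > 0"
  shows "(\<lambda>N. ln (Q N x) / real (N+2)) \<longlonglongrightarrow> ln (2 + sqrt x)"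
proof -
  define a where "a = 2 + sqrt x"
  define b where "b = 2 - sqrt x"
  define q where "q = b / a"
  have s: "sqrt x > 0" using x by simp
  have a: "a > 0" using s unfolding a_def by linarith
  have b1: "- a < b" unfolding a_def b_def by simp
  have b2: "b < a" using s unfolding a_def b_def by simp
  have ba: "\<bar>b\<bar> < a" using b1 b2 by (simp only: abs_less_iff) simp
  have qa: "\<bar>q\<bar> = \<bar>b\<bar> / a" using a unfolding q_def by (simp add: abs_divide)
  have q: "\<bar>q\<bar> < 1" unfolding qa using a ba by (simp add: divide_less_eq)
  have aq: "a * q = b" using a unfolding q_def by simp
  have q1: "1 + q^N > 0" for N
  proof (cases N)
    case (Suc n)
    have "\<bar>q\<bar>^N < 1^N" using q Suc by (intro power_strict_mono) auto
    then have "\<bar>q^N\<bar> < 1" by (simp add: power_abs)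
    then show ?thesis unfolding abs_less_iff by linarith
  qed simp
  have eq: "ln (Q N x) / real (N+2) = ln (x/2) * (1 / real (N+2)) + ln a * (real N / real (N+2))
            + ln (1 + q^N) * (1 / real (N+2))" for N
  proof -
    have "a^N * q^N = b^N" by (metis aq power_mult_distrib)
    then have "a^N * (1 + q^N) = a^N + b^N"
      by (simp add: distrib_left)
    then have Qeq: "Q N x = x / 2 * (a^N * (1 + q^N))"
      using Q_closed[of x N] x by (simp add: a_def b_def)
    have p: "x / 2 > 0" "a^N > 0" "1 + q^N > 0" using x a q1[of N] by simp_all
    have "ln (Q N x) = ln (x/2) + (ln (a^N) + ln (1 + q^N))"
    proof -
      have ne: "x / 2 \<noteq> 0" "a^N \<noteq> 0" "1 + q^N \<noteq> 0" "a^N * (1 + q^N) \<noteq> 0"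
        using p a by auto
      show ?thesis unfolding Qeq ln_mult using ne by simp
    qed
    also have "ln (a^N) = real N * ln a" using a by (simp add: ln_realpow)
    finally show ?thesis by (simp add: add_divide_distrib)
  qed
  have l3: "(\<lambda>N. ln (1 + q^N)) \<longlonglongrightarrow> ln (1 + 0)"
    using q by (intro tendsto_intros) auto
  have "(\<lambda>N. ln (x/2) * (1 / real (N+2)) + ln a * (real N / real (N+2))
            + ln (1 + q^N) * (1 / real (N+2))) \<longlonglongrightarrow> ln (x/2) * 0 + ln a * 1 + ln (1+0) * 0"
    by (intro tendsto_intros l1 l2 l3)
  then show ?thesis unfolding eq by (simp add: a_def)
qed

definition psi :: "real \<Rightarrow> real" where "psi a = ln (2 + exp (a/2))"

lemma sqrt_exp: "sqrt (exp a) = exp (a/2)"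
  by (rule real_sqrt_unique) (simp_all add: power2_eq_square exp_add[symmetric])

lemma low_all:
  assumes pos: "\<forall>m\<ge>1. W m > (0::real)"
    and ev: "eventually (\<lambda>m. exp a ^ m \<le> W m) sequentially"
  shows "\<exists>k>0. \<forall>m\<ge>1. k * exp a ^ m \<le> W m"
proof -
  obtain M0 where M0: "\<forall>m\<ge>M0. exp a ^ m \<le> W m" using ev by (auto simp: eventually_sequentially)
  define k where "k = Min (insert 1 ((\<lambda>m. W m / exp a ^ m) ` {1..M0}))"
  have kpos: "k > 0" unfolding k_def using pos by (subst Min_gr_iff) auto
  have k1: "k \<le> 1" unfolding k_def by (rule Min_le) auto
  have "k * exp a ^ m \<le> W m" if m: "m \<ge> 1" for m
  proof (cases "m \<ge> M0")
    case True
    then have "exp a ^ m \<le> W m" using M0 by auto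
    moreover have "k * exp a ^ m \<le> exp a ^ m" using k1 by simp
    ultimately show ?thesis by linarith
  next
    case False
    then have "k \<le> W m / exp a ^ m" unfolding k_def using m by (intro Min_le) auto
    then show ?thesis by (simp add: field_simps)
  qed
  with kpos show ?thesis by blast
qed

lemma up_all:
  fixes W :: "nat \<Rightarrow> real"
  assumes ev: "eventually (\<lambda>m. W m \<le> exp a ^ m) sequentially"
  shows "\<exists>K>0. \<forall>m\<ge>1. W m \<le> K * exp a ^ m"
proof -
  obtain M0 where M0: "\<forall>m\<ge>M0. W m \<le> exp a ^ m" using ev by (auto simp: eventually_sequentially)
  define K where "K = Max (insert 1 ((\<lambda>m. W m / exp a ^ m) ` {1..M0}))"
  have K1: "K \<ge> 1" unfolding K_def by (rule Max_ge) auto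
  have "W m \<le> K * exp a ^ m" if m: "m \<ge> 1" for m
  proof (cases "m \<ge> M0")
    case True
    then have "W m \<le> exp a ^ m" using M0 by auto
    moreover have "exp a ^ m \<le> K * exp a ^ m" using K1 by simp
    ultimately show ?thesis by linarith
  next
    case False
    then have "W m / exp a ^ m \<le> K" unfolding K_def using m by (intro Max_ge) auto
    then show ?thesis by (simp add: field_simps)
  qed
  moreover have "K > 0" using K1 by simp
  ultimately show ?thesis by blast
qed

lemma kQ_lim:
  assumes k: "k > 0"
  shows "(\<lambda>N. ln (k * Q N (exp a)) / real (N+2)) \<longlonglongrightarrow> psi a"
proof -
  have eq: "ln (k * Q N (exp a)) / real (N+2) = ln k * (1 / real (N+2)) + ln (Q N (exp a)) / real (N+2)" for N
  proof -
    have "ln (k * Q N (exp a)) = ln k + ln (Q N (exp a))"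
      using k Q_pos[of "exp a" N] by (simp add: ln_mult)
    then show ?thesis by (simp add: add_divide_distrib)
  qed
  have l1: "(\<lambda>N. 1 / real (N+2)) \<longlonglongrightarrow> 0" by real_asymp
  have "(\<lambda>N. ln k * (1 / real (N+2)) + ln (Q N (exp a)) / real (N+2)) \<longlonglongrightarrow> ln k * 0 + ln (2 + sqrt (exp a))"
    by (intro tendsto_intros l1 Q_lim) simp
  then show ?thesis unfolding eq by (simp add: psi_def sqrt_exp)
qed

lemma LB_step:
  assumes k: "k > 0" and W: "\<forall>m\<ge>1. k * exp a ^ m \<le> W m"
    and a': "a' < psi a"
  shows "eventually (\<lambda>N. exp (real (N+2) * a') \<le> (\<Sum>M\<le>N+1. cc N M * W (M+1))) sequentially"
proof -
  have ge: "k * Q N (exp a) \<le> (\<Sum>M\<le>N+1. cc N M * W (M+1))" for N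
  proof -
    have "k * Q N (exp a) = (\<Sum>M\<le>N+1. cc N M * (k * exp a ^ (M+1)))"
      unfolding Q_def sum_distrib_left by (intro sum.cong refl) (simp add: mult_ac)
    also have "\<dots> \<le> (\<Sum>M\<le>N+1. cc N M * W (M+1))"
      using W by (intro sum_mono mult_left_mono cc_nonneg) auto
    finally show ?thesis .
  qed
  have "eventually (\<lambda>N. ln (k * Q N (exp a)) / real (N+2) > a') sequentially"
    by (rule order_tendstoD(1)[OF kQ_lim[OF k] a'])
  then show ?thesis
  proof (rule eventually_mono)
    fix N assume h: "ln (k * Q N (exp a)) / real (N+2) > a'"
    have pos: "k * Q N (exp a) > 0" using k Q_pos[of "exp a" N] by simp
    have "real (N+2) * a' < ln (k * Q N (exp a))" using h by (simp add: field_simps)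
    then have "exp (real (N+2) * a') < k * Q N (exp a)" using pos by (metis exp_less_cancel_iff exp_ln)
    then show "exp (real (N+2) * a') \<le> (\<Sum>M\<le>N+1. cc N M * W (M+1))" using ge[of N] by linarith
  qed
qed

lemma UB_step:
  assumes K: "K > 0" and W: "\<forall>m\<ge>1. W m \<le> K * exp b ^ m"
    and b': "b' > psi b"
  shows "eventually (\<lambda>N. (\<Sum>M\<le>N+1. cc N M * W (M+1)) \<le> exp (real (N+2) * b')) sequentially"
proof -
  have le: "(\<Sum>M\<le>N+1. cc N M * W (M+1)) \<le> K * Q N (exp b)" for N
  proof -
    have "K * Q N (exp b) = (\<Sum>M\<le>N+1. cc N M * (K * exp b ^ (M+1)))"
      unfolding Q_def sum_distrib_left by (intro sum.cong refl) (simp add: mult_ac)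
    moreover have "(\<Sum>M\<le>N+1. cc N M * W (M+1)) \<le> (\<Sum>M\<le>N+1. cc N M * (K * exp b ^ (M+1)))"
      using W by (intro sum_mono mult_left_mono cc_nonneg) auto
    ultimately show ?thesis by simp
  qed
  have "eventually (\<lambda>N. ln (K * Q N (exp b)) / real (N+2) < b') sequentially"
    by (rule order_tendstoD(2)[OF kQ_lim[OF K] b'])
  then show ?thesis
  proof (rule eventually_mono)
    fix N assume h: "ln (K * Q N (exp b)) / real (N+2) < b'"
    have pos: "K * Q N (exp b) > 0" using K Q_pos[of "exp b" N] by simp
    have "ln (K * Q N (exp b)) < real (N+2) * b'" using h by (simp add: field_simps)
    then have "K * Q N (exp b) < exp (real (N+2) * b')" using pos by (metis exp_less_cancel_iff exp_ln)
    then show "(\<Sum>M\<le>N+1. cc N M * W (M+1)) \<le> exp (real (N+2) * b')" using le[of N] by linarith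
  qed
qed

lemma psi_mono: "a \<le> b \<Longrightarrow> psi a \<le> psi b"
  unfolding psi_def by (subst ln_le_cancel_iff) (auto intro: add_pos_pos)

lemma two_exp_nz: "2 + exp t \<noteq> (0::real)"
  using exp_gt_zero[of t] by linarith

lemma psi_cont: "(\<lambda>n. psi (l + c * inverse (real (Suc n)))) \<longlonglongrightarrow> psi l"
proof -
  have "(\<lambda>n. ln (2 + exp ((l + c * inverse (real (Suc n))) / 2))) \<longlonglongrightarrow> ln (2 + exp ((l + c * 0) / 2))"
    by (intro tendsto_intros LIMSEQ_inverse_real_of_nat) (simp_all add: two_exp_nz)
  then show ?thesis by (simp add: psi_def)
qed

lemma lim_low:
  assumes lim: "(\<lambda>m. ln (W m) / real m) \<longlonglongrightarrow> l" and pos: "\<forall>m\<ge>1. W m > 0" and a: "a < l"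
  shows "eventually (\<lambda>m. exp a ^ m \<le> W m) sequentially"
proof -
  have "eventually (\<lambda>m. ln (W m) / real m > a \<and> m \<ge> 1) sequentially"
    using order_tendstoD(1)[OF lim a] eventually_ge_at_top[of 1] by eventually_elim auto
  then show ?thesis
  proof (rule eventually_mono)
    fix m assume h: "ln (W m) / real m > a \<and> m \<ge> 1"
    have mp: "real m > 0" using h by simp
    have "a * real m < ln (W m)" using h by (simp add: pos_less_divide_eq[OF mp])
    then have "real m * a < ln (W m)" by (simp add: mult.commute)
    then have "exp (real m * a) < W m" using pos h by (metis exp_less_cancel_iff exp_ln)
    then show "exp a ^ m \<le> W m" by (simp add: exp_of_nat_mult)
  qed
qed

lemma lim_up:
  assumes lim: "(\<lambda>m. ln (W m) / real m) \<longlonglongrightarrow> l" and pos: "\<forall>m\<ge>1. W m > 0" and b: "b > l"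
  shows "eventually (\<lambda>m. W m \<le> exp b ^ m) sequentially"
proof -
  have "eventually (\<lambda>m. ln (W m) / real m < b \<and> m \<ge> 1) sequentially"
    using order_tendstoD(2)[OF lim b] eventually_ge_at_top[of 1] by eventually_elim auto
  then show ?thesis
  proof (rule eventually_mono)
    fix m assume h: "ln (W m) / real m < b \<and> m \<ge> 1"
    have mp: "real m > 0" using h by simp
    have "ln (W m) < b * real m" using h by (simp add: pos_divide_less_eq[OF mp])
    then have "ln (W m) < real m * b" by (simp add: mult.commute)
    then have "W m < exp (real m * b)" using pos h by (metis exp_less_cancel_iff exp_ln)
    then show "W m \<le> exp b ^ m" by (simp add: exp_of_nat_mult)
  qed
qed

lemma transfer:
  assumes pos: "\<forall>m\<ge>1. W m > 0" and lim: "(\<lambda>m. ln (W m) / real m) \<longlonglongrightarrow> l"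
  shows "(\<lambda>N. ln (\<Sum>M\<le>N+1. cc N M * W (M+1)) / real (N+2)) \<longlonglongrightarrow> psi l"
proof (rule order_tendstoI)
  fix a' assume a': "a' < psi l"
  define a'' where "a'' = (a' + psi l) / 2"
  have a''1: "a' < a''" "a'' < psi l" using a' by (auto simp: a''_def)
  have "eventually (\<lambda>n. psi (l + (-1) * inverse (real (Suc n))) > a'') sequentially"
    by (rule order_tendstoD(1)[OF psi_cont a''1(2)])
  then obtain n where n: "psi (l - inverse (real (Suc n))) > a''"
    by (auto simp: eventually_sequentially)
  define a where "a = l - inverse (real (Suc n))"
  have al: "a < l" by (simp add: a_def)
  obtain k where k: "k > 0" "\<forall>m\<ge>1. k * exp a ^ m \<le> W m"
    using low_all[OF pos lim_low[OF lim pos al]] by blast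
  have "eventually (\<lambda>N. exp (real (N+2) * a'') \<le> (\<Sum>M\<le>N+1. cc N M * W (M+1))) sequentially"
    using LB_step[OF k(1) k(2)] n by (simp add: a_def)
  then show "eventually (\<lambda>N. ln (\<Sum>M\<le>N+1. cc N M * W (M+1)) / real (N+2) > a') sequentially"
  proof (rule eventually_mono)
    fix N assume h: "exp (real (N+2) * a'') \<le> (\<Sum>M\<le>N+1. cc N M * W (M+1))"
    have "0 < exp (real (N+2) * a'')" by simp
    then have "real (N+2) * a'' \<le> ln (\<Sum>M\<le>N+1. cc N M * W (M+1))"
      using h ln_ge_iff by (metis order_less_le_trans)
    then have "a'' \<le> ln (\<Sum>M\<le>N+1. cc N M * W (M+1)) / real (N+2)"
      by (simp add: field_simps)
    then show "ln (\<Sum>M\<le>N+1. cc N M * W (M+1)) / real (N+2) > a'" using a''1 by linarith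
  qed
next
  fix b' assume b': "b' > psi l"
  define b'' where "b'' = (b' + psi l) / 2"
  have b''1: "b' > b''" "b'' > psi l" using b' by (auto simp: b''_def)
  have "eventually (\<lambda>n. psi (l + 1 * inverse (real (Suc n))) < b'') sequentially"
    by (rule order_tendstoD(2)[OF psi_cont b''1(2)])
  then obtain n where n: "psi (l + inverse (real (Suc n))) < b''"
    by (auto simp: eventually_sequentially)
  define b where "b = l + inverse (real (Suc n))"
  have bl: "b > l" by (simp add: b_def)
  obtain K where K: "K > 0" "\<forall>m\<ge>1. W m \<le> K * exp b ^ m"
    using up_all[OF lim_up[OF lim pos bl]] by blast
  have lowpos: "eventually (\<lambda>N. 0 < (\<Sum>M\<le>N+1. cc N M * W (M+1))) sequentially"
  proof -
    have "psi l - 1 < psi l" by simp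
    obtain k where k: "k > 0" "\<forall>m\<ge>1. k * exp (l - 1) ^ m \<le> W m"
      using low_all[OF pos lim_low[OF lim pos, of "l - 1"]] by auto
    have "psi (l - 1) - 1 < psi (l - 1)" by simp
    from LB_step[OF k(1) k(2) this] show ?thesis
      by (rule eventually_mono) (metis exp_gt_zero order_less_le_trans)
  qed
  have "eventually (\<lambda>N. (\<Sum>M\<le>N+1. cc N M * W (M+1)) \<le> exp (real (N+2) * b'')) sequentially"
    using UB_step[OF K(1) K(2)] n by (simp add: b_def)
  with lowpos show "eventually (\<lambda>N. ln (\<Sum>M\<le>N+1. cc N M * W (M+1)) / real (N+2) < b') sequentially"
  proof eventually_elim
    case (elim N)
    then have "ln (\<Sum>M\<le>N+1. cc N M * W (M+1)) \<le> real (N+2) * b''"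
      by (metis ln_exp ln_le_cancel_iff exp_gt_zero)
    then have "ln (\<Sum>M\<le>N+1. cc N M * W (M+1)) / real (N+2) \<le> b''"
      by (simp add: field_simps)
    then show ?case using b''1 by linarith
  qed
qed

definition C :: "nat \<Rightarrow> real" where "C m = real (card (Omega m))"

lemma C_ge1: "m \<ge> 1 \<Longrightarrow> C m \<ge> 1"
proof -
  assume m: "m \<ge> 1"
  have "card (Omega m) \<noteq> 0" using Omega_ne[OF m] finite_Omega[of m] by simp
  then show ?thesis by (simp add: C_def)
qed

lemma C_pos: "\<forall>m\<ge>1. C m > 0"
  using C_ge1 by (metis less_le_trans zero_less_one)

lemma C_le: "C m \<le> 4 ^ m"
proof -
  have "real (card (Omega m)) \<le> real (4 ^ m)" using card_Omega_le[of m] by (rule of_nat_mono)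
  then show ?thesis by (simp add: C_def)
qed

lemma C_rec: "C (N+2) = (\<Sum>M\<le>N+1. cc N M * C (M+1))"
  using sum_S_rec[of 1 "\<lambda>_. 1" N] by (simp add: C_def)

definition P :: "real \<Rightarrow> bool" where "P a \<longleftrightarrow> (\<exists>k>0. \<forall>m\<ge>1. k * exp a ^ m \<le> C m)"

lemma P_step:
  assumes "P a" "a' < psi a"
  shows "P a'"
proof -
  obtain k where k: "k > 0" "\<forall>m\<ge>1. k * exp a ^ m \<le> C m" using assms(1) P_def by blast
  have "eventually (\<lambda>N. exp (real (N+2) * a') \<le> (\<Sum>M\<le>N+1. cc N M * C (M+1))) sequentially"
    by (rule LB_step[OF k assms(2)])
  then have "eventually (\<lambda>N. exp a' ^ (N+2) \<le> C (N+2)) sequentially"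
    by (rule eventually_mono) (simp only: C_rec exp_of_nat_mult)
  then have "eventually (\<lambda>m. exp a' ^ m \<le> C m) sequentially"
    using eventually_sequentially_seg[of "\<lambda>m. exp a' ^ m \<le> C m" 2] by simp
  then show ?thesis unfolding P_def by (rule low_all[OF C_pos])
qed

lemma P_down: "P a \<Longrightarrow> b \<le> a \<Longrightarrow> P b"
proof -
  assume "P a" "b \<le> a"
  then obtain k where k: "k > 0" "\<forall>m\<ge>1. k * exp a ^ m \<le> C m" using P_def by blast
  have "k * exp b ^ m \<le> C m" if "m \<ge> 1" for m
  proof -
    have "exp b ^ m \<le> exp a ^ m" using \<open>b \<le> a\<close> by (intro power_mono) auto
    then have "k * exp b ^ m \<le> k * exp a ^ m" using k(1) by simp
    then show ?thesis using k(2) that by (meson order_trans)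
  qed
  then show ?thesis unfolding P_def using k(1) by blast
qed

lemma P0: "P 0"
  unfolding P_def using C_ge1 by (intro exI[of _ 1]) auto

lemma ln4: "ln (4::real) = 2 * ln 2"
proof -
  have "ln ((2::real)^2) = 2 * ln 2" by (subst ln_realpow) auto
  then show ?thesis by simp
qed

lemma psi_gt: "s < ln 4 \<Longrightarrow> psi s > s"
proof -
  assume s: "s < ln 4"
  define u where "u = exp (s/2)"
  have u0: "u > 0" by (simp add: u_def)
  have "s/2 < ln 2" using s ln4 by simp
  then have "exp (s/2) < exp (ln 2)" by (simp only: exp_less_cancel_iff)
  then have u2: "u < 2" by (simp add: u_def)
  have eu: "exp s = u * u" unfolding u_def by (simp add: exp_add[symmetric])
  have "u * u < 2 + u"
  proof -
    have "(u - 2) * (u + 1) < 0" using u0 u2 by (intro mult_neg_pos) auto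
    then show ?thesis by (simp add: algebra_simps)
  qed
  then have "ln (exp s) < ln (2 + u)" using eu u0 by (subst ln_less_cancel_iff) auto
  then show ?thesis by (simp add: psi_def u_def)
qed

lemma P_all: "a < ln 4 \<Longrightarrow> P a"
proof (rule ccontr)
  assume a0: "a < ln 4" and nP: "\<not> P a"
  define A where "A = {b. P b}"
  have Ane: "A \<noteq> {}" using P0 by (auto simp: A_def)
  have Alt: "b < a" if "b \<in> A" for b
  proof (rule ccontr)
    assume "\<not> b < a"
    then have "a \<le> b" by simp
    with that P_down have "P a" by (auto simp: A_def)
    with nP show False by simp
  qed
  have bdd: "bdd_above A" using Alt by (meson bdd_aboveI less_imp_le)
  define s where "s = Sup A"
  have sa: "s \<le> a" unfolding s_def using Ane Alt by (meson cSup_least less_imp_le)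
  have sp: "s < psi s" using psi_gt sa a0 by simp
  have "eventually (\<lambda>n. psi (s + (-1) * inverse (real (Suc n))) > s) sequentially"
    by (rule order_tendstoD(1)[OF psi_cont sp])
  then obtain n where n: "psi (s - inverse (real (Suc n))) > s"
    by (auto simp: eventually_sequentially)
  have "s - inverse (real (Suc n)) < Sup A" unfolding s_def[symmetric] by simp
  then obtain b where b: "b \<in> A" "s - inverse (real (Suc n)) < b"
    using less_cSup_iff[OF Ane bdd] by blast
  have "psi b \<ge> psi (s - inverse (real (Suc n)))" using b(2) by (intro psi_mono) simp
  then have pb: "psi b > s" using n by simp
  define b' where "b' = (s + psi b) / 2"
  have "b' < psi b" "s < b'" using pb by (auto simp: b'_def)
  then have "P b'" using b(1) P_step by (auto simp: A_def)
  then have "b' \<le> s" unfolding s_def using bdd by (intro cSup_upper) (auto simp: A_def)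
  with \<open>s < b'\<close> show False by simp
qed

lemma C_lim: "(\<lambda>m. ln (C m) / real m) \<longlonglongrightarrow> ln 4"
proof (rule order_tendstoI)
  fix a :: real assume a: "a < ln 4"
  define a'' where "a'' = (a + ln 4) / 2"
  have a''1: "a < a''" "a'' < ln 4" using a by (auto simp: a''_def)
  obtain k where k: "k > 0" "\<forall>m\<ge>1. k * exp a'' ^ m \<le> C m"
    using P_all[OF a''1(2)] P_def by blast
  have "(\<lambda>m. ln k / real m + a'') \<longlonglongrightarrow> 0 + a''"
    by (intro tendsto_intros)
  then have "eventually (\<lambda>m. ln k / real m + a'' > a) sequentially"
    using a''1(1) by (intro order_tendstoD(1)) auto
  then show "eventually (\<lambda>m. ln (C m) / real m > a) sequentially"
    using eventually_ge_at_top[of 1]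
  proof eventually_elim
    case (elim m)
    have mp: "real m > 0" using elim by simp
    have "ln (k * exp a'' ^ m) \<le> ln (C m)"
      using k elim C_pos by (subst ln_le_cancel_iff) auto
    then have "ln k + real m * a'' \<le> ln (C m)"
      using k(1) by (simp add: ln_mult ln_realpow)
    then have "(ln k + real m * a'') / real m \<le> ln (C m) / real m"
      using mp by (intro divide_right_mono) auto
    moreover have "(ln k + real m * a'') / real m = ln k / real m + a''"
      using mp by (simp add: add_divide_distrib)
    ultimately have "ln k / real m + a'' \<le> ln (C m) / real m" by simp
    then show ?case using elim by linarith
  qed
next
  fix b :: real assume b: "b > ln 4"
  show "eventually (\<lambda>m. ln (C m) / real m < b) sequentially"
    using eventually_ge_at_top[of 1]
  proof (rule eventually_mono)
    fix m :: nat assume m: "m \<ge> 1"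
    have mp: "real m > 0" using m by simp
    have "ln (C m) \<le> ln (4 ^ m)"
      using C_le[of m] C_ge1[OF m] by (subst ln_le_cancel_iff) auto
    then have "ln (C m) \<le> real m * ln 4" by (simp add: ln_realpow)
    then have "ln (C m) / real m \<le> ln 4" using mp by (simp add: field_simps)
    then show "ln (C m) / real m < b" using b by linarith
  qed
qed

definition Wk :: "real \<Rightarrow> nat \<Rightarrow> nat \<Rightarrow> real" where
  "Wk \<xi> k m = (\<Sum>t\<in>Omega m. exp (\<xi> * real (S k t)))"

lemma Wk_pos: "\<forall>m\<ge>1. Wk \<xi> k m > 0"
  unfolding Wk_def using Omega_ne finite_Omega by (auto intro!: sum_pos)

lemma Wk1: "Wk \<xi> 1 m = C m * exp (\<xi> * real m)"
proof -
  have "Wk \<xi> 1 m = (\<Sum>t\<in>Omega m. exp (\<xi> * real m))"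
    unfolding Wk_def by (intro sum.cong refl) (simp add: S1[simplified] Omega_def)
  then show ?thesis by (simp add: C_def)
qed

lemma Wk_rec: "k \<ge> 1 \<Longrightarrow> Wk \<xi> (Suc k) (N+2) = (\<Sum>M\<le>N+1. cc N M * Wk \<xi> k (M+1))"
  unfolding Wk_def by (rule sum_S_rec)

lemma psi_phi: "psi (ln 4 + L) = ln 4 + phi L"
proof -
  have e2: "exp (ln 4 / 2) = (2::real)" using ln4 by simp
  have "exp (L/4) * exp (L/4) = exp (L/2)" by (simp add: exp_add[symmetric])
  moreover have "exp (L/4) * exp (-(L/4)) = 1" by (simp add: exp_add[symmetric])
  ultimately have key: "4 * exp (L/4) * cosh (L/4) = 2 + exp ((ln 4 + L) / 2)"
    by (simp add: cosh_def e2 exp_add add_divide_distrib algebra_simps)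
  have "ln 4 + phi L = ln (4 * exp (L/4) * cosh (L/4))"
    by (simp add: phi_def ln_mult)
  also have "\<dots> = psi (ln 4 + L)" by (simp add: key psi_def)
  finally show ?thesis by simp
qed

lemma main_lim: "(\<lambda>m. ln (Wk \<xi> (Suc j) m) / real m) \<longlonglongrightarrow> ln 4 + (phi ^^ j) \<xi>"
proof (induct j)
  case 0
  have "(\<lambda>m. ln (C m) / real m + \<xi>) \<longlonglongrightarrow> ln 4 + \<xi>"
    by (intro tendsto_intros C_lim)
  moreover have "eventually (\<lambda>m. ln (C m) / real m + \<xi> = ln (Wk \<xi> (Suc 0) m) / real m) sequentially"
    using eventually_ge_at_top[of 1]
  proof (rule eventually_mono)
    fix m :: nat assume m: "m \<ge> 1"
    have "ln (Wk \<xi> (Suc 0) m) = ln (C m) + \<xi> * real m"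
      using Wk1[of \<xi> m] C_ge1[OF m] by (simp add: ln_mult)
    then show "ln (C m) / real m + \<xi> = ln (Wk \<xi> (Suc 0) m) / real m"
      using m by (simp add: field_simps)
  qed
  ultimately show ?case by (simp add: Lim_transform_eventually)
next
  case (Suc j)
  have "(\<lambda>N. ln (\<Sum>M\<le>N+1. cc N M * Wk \<xi> (Suc j) (M+1)) / real (N+2)) \<longlonglongrightarrow> psi (ln 4 + (phi ^^ j) \<xi>)"
    by (rule transfer[OF Wk_pos Suc])
  then have "(\<lambda>N. ln (Wk \<xi> (Suc (Suc j)) (N+2)) / real (N+2)) \<longlonglongrightarrow> ln 4 + (phi ^^ Suc j) \<xi>"
    by (simp only: Wk_rec[symmetric, of "Suc j"] psi_phi funpow.simps comp_def)
  then show ?case by (rule LIMSEQ_offset)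
qed

theorem lemma2p1:
  fixes r :: nat and \<xi> :: real
  assumes "r \<ge> 1"
  shows "(\<lambda>n. ln (measure_pmf.expectation (pmf_of_set (Omega n))
                   (\<lambda>t. exp (\<xi> * real (S (r + 1) t)))) / real n)
         \<longlonglongrightarrow> (phi ^^ r) \<xi>"
proof -
  have "(\<lambda>n. ln (Wk \<xi> (Suc r) n) / real n - ln (C n) / real n) \<longlonglongrightarrow> (ln 4 + (phi ^^ r) \<xi>) - ln 4"
    by (intro tendsto_intros main_lim C_lim)
  moreover have "eventually (\<lambda>n. ln (Wk \<xi> (Suc r) n) / real n - ln (C n) / real n =
      ln (measure_pmf.expectation (pmf_of_set (Omega n)) (\<lambda>t. exp (\<xi> * real (S (r + 1) t)))) / real n) sequentially"
    using eventually_ge_at_top[of 1]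
  proof (rule eventually_mono)
    fix n :: nat assume n: "n \<ge> 1"
    have "measure_pmf.expectation (pmf_of_set (Omega n)) (\<lambda>t. exp (\<xi> * real (S (r + 1) t)))
          = Wk \<xi> (Suc r) n / C n"
      using integral_pmf_of_set[OF Omega_ne[OF n] finite_Omega] by (simp add: Wk_def C_def)
    moreover have "ln (Wk \<xi> (Suc r) n / C n) = ln (Wk \<xi> (Suc r) n) - ln (C n)"
    proof -
      have "Wk \<xi> (Suc r) n > 0" "C n > 0" using Wk_pos[of \<xi> "Suc r"] C_pos n by auto
      then show ?thesis by (simp add: ln_div)
    qed
    ultimately show "ln (Wk \<xi> (Suc r) n) / real n - ln (C n) / real n =
      ln (measure_pmf.expectation (pmf_of_set (Omega n)) (\<lambda>t. exp (\<xi> * real (S (r + 1) t)))) / real n"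
      by (simp add: diff_divide_distrib)
  qed
  ultimately show ?thesis by (simp add: Lim_transform_eventually)
qed

end
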